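(* Let $\beta>2\alpha>0$, let $\lambda_{\min},\lambda_{\max}>0$ be the smallest and largest eigenvalues of $A$, and let $R>2\lambda_{\max}/\lambda_{\min}$, so that $c_{11}:=\frac{\lambda_{\min}}{2}-\frac{\lambda_{\max}}{R}>0$. Then for every $x\in\mathbb{R}^{s_N}$ with $\|x\|>R\sqrt N$, $$\frac{N}{s_N}\varphi_N\Big(\sqrt{\tfrac{s_N}{N}}x\Big)\ge c_{11}\|x\|_2^2.$$
   Context: $A=\beta I+\alpha(P+P^T)$ is the $s_N\times s_N$ symmetric circulant matrix ($P$ the cyclic shift), with $s_N\le N$ a positive integer; $e_k$ the standard basis of $\mathbb{R}^{s_N}$; $\varphi_N(x)=\frac12x^TAx-\sum_{k=1}^{s_N}\log\cosh(x^TAe_k)$; $\|\cdot\|=\|\cdot\|_2$ is the Euclidean norm. *)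

theory Defs
  imports Complex_Main "Jordan_Normal_Form.Char_Poly"
begin

definition cyc_shift :: "nat \<Rightarrow> real mat" where
  "cyc_shift s = mat s s (\<lambda>(i, j). if j = (i + 1) mod s then 1 else 0)"

definition circA :: "real \<Rightarrow> real \<Rightarrow> nat \<Rightarrow> real mat" where
  "circA \<alpha> \<beta> s = \<beta> \<cdot>\<^sub>m 1\<^sub>m s + \<alpha> \<cdot>\<^sub>m (cyc_shift s + transpose_mat (cyc_shift s))"

definition vnorm :: "real vec \<Rightarrow> real" where
  "vnorm x = sqrt (x \<bullet> x)"

definition phiN :: "real \<Rightarrow> real \<Rightarrow> nat \<Rightarrow> real vec \<Rightarrow> real" where
  "phiN \<alpha> \<beta> s x = (1/2) * (x \<bullet> (circA \<alpha> \<beta> s *\<^sub>v x))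
      - (\<Sum>k<s. ln (cosh (x \<bullet> (circA \<alpha> \<beta> s *\<^sub>v unit_vec s k))))"

end

theory Submission
  imports Defs "HOL-Analysis.Function_Topology" "HOL-Analysis.Convex"
begin

lemma coord_cont [continuous_intros]: "continuous_on S (\<lambda>x::nat\<Rightarrow>real. x i)"
  by (rule continuous_on_subset[OF continuous_on_product_coordinates]) simp

lemma min_exists:
  fixes q :: "(nat \<Rightarrow> real) \<Rightarrow> real" and s :: nat
  assumes cq: "continuous_on UNIV q" and s: "0 < s"
  defines "S \<equiv> {g. (\<forall>i. g i \<in> (if i < s then {-1..1} else {0})) \<and> (\<Sum>i<s. (g i)\<^sup>2) = 1}"
  shows "\<exists>f0\<in>S. \<forall>g\<in>S. q f0 \<le> q g"
proof (rule continuous_attains_inf)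
  have "compactin (product_topology (\<lambda>i. euclidean) UNIV) (PiE UNIV (\<lambda>i. if i < s then {-1..1::real} else {0}))"
    by (subst compactin_PiE) auto
  hence "compact (PiE UNIV (\<lambda>i. if i < s then {-1..1::real} else {0}))"
    by (simp add: euclidean_product_topology)
  moreover have "closed {g::nat\<Rightarrow>real. (\<Sum>i<s. (g i)\<^sup>2) = 1}"
    by (intro closed_Collect_eq continuous_intros)
  ultimately have "compact (PiE UNIV (\<lambda>i. if i < s then {-1..1::real} else {0}) \<inter> {g::nat\<Rightarrow>real. (\<Sum>i<s. (g i)\<^sup>2) = 1})"
    by (rule compact_Int_closed)
  moreover have "PiE UNIV (\<lambda>i. if i < s then {-1..1::real} else {0}) \<inter> {g::nat\<Rightarrow>real. (\<Sum>i<s. (g i)\<^sup>2) = 1} = S"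
    unfolding S_def set_eq_iff by (simp add: PiE_iff split del: if_split)
  ultimately show "compact S" by simp
  let ?e = "\<lambda>i::nat. if i = 0 then 1::real else 0"
  have "?e \<in> S" unfolding S_def using s by (auto simp: power2_eq_square if_distrib sum.delta cong: if_cong)
  thus "S \<noteq> {}" by blast
  show "continuous_on S q" by (rule continuous_on_subset[OF cq]) simp
qed


lemma quad_zero:
  fixes b c :: real
  assumes "\<And>t. 0 \<le> 2*t*b + t\<^sup>2*c"
  shows "b = 0"
proof (rule ccontr)
  assume b: "b \<noteq> 0"
  define d where "d = \<bar>c\<bar> + 1"
  have d: "d \<ge> 1" unfolding d_def by simp
  define t where "t = - b / d"
  have "t\<^sup>2 * c \<le> t\<^sup>2 * \<bar>c\<bar>" by (simp add: mult_left_mono)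
  also have "\<dots> \<le> t\<^sup>2 * d" unfolding d_def by (simp add: mult_left_mono)
  also have "\<dots> = b\<^sup>2 / d" unfolding t_def using d by (simp add: power2_eq_square field_simps)
  finally have tc: "t\<^sup>2*c \<le> b\<^sup>2/d" .
  have "2*t*b = - 2*b\<^sup>2/d" unfolding t_def using d by (simp add: power2_eq_square field_simps)
  hence "2*t*b + t\<^sup>2*c \<le> - 2*b\<^sup>2/d + b\<^sup>2/d" using tc by linarith
  also have "\<dots> = - b\<^sup>2/d" by simp
  also have "\<dots> < 0" using b d by simp
  finally show False using assms[of t] by simp
qed

lemma rayleigh_fun:
  fixes a :: "nat \<Rightarrow> nat \<Rightarrow> real" and s :: nat
  assumes sym: "\<And>i j. i<s \<Longrightarrow> j<s \<Longrightarrow> a i j = a j i" and s: "0<s"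
  defines "q \<equiv> \<lambda>f g. \<Sum>i<s. \<Sum>j<s. a i j * f i * g j"
  shows "\<exists>f0 \<mu>. (\<Sum>i<s. (f0 i)\<^sup>2) = 1 \<and> (\<forall>i<s. (\<Sum>j<s. a i j * f0 j) = \<mu> * f0 i)
     \<and> (\<forall>g. q g g \<ge> \<mu> * (\<Sum>i<s. (g i)\<^sup>2))"
proof -
  define S where "S \<equiv> {g. (\<forall>i. g i \<in> (if i < s then {-1..1::real} else {0})) \<and> (\<Sum>i<s. (g i)\<^sup>2) = 1}"
  have cq: "continuous_on UNIV (\<lambda>f. q f f)" unfolding q_def by (intro continuous_intros)
  obtain f0 where f0S: "f0 \<in> S" and f0min: "\<And>g. g \<in> S \<Longrightarrow> q f0 f0 \<le> q g g"
    using min_exists[OF cq s] unfolding S_def by blast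
  have n0: "(\<Sum>i<s. (f0 i)\<^sup>2) = 1" using f0S unfolding S_def by simp
  define \<mu> where "\<mu> = q f0 f0"
  have lower: "q g g \<ge> \<mu> * (\<Sum>i<s. (g i)\<^sup>2)" for g
  proof (cases "(\<Sum>i<s. (g i)\<^sup>2) = 0")
    case True
    hence "\<forall>i\<in>{..<s}. (g i)\<^sup>2 = 0" by (subst sum_nonneg_eq_0_iff[symmetric]) auto
    hence "q g g = 0" unfolding q_def by simp
    with True show ?thesis by simp
  next
    case False
    define ng where "ng = (\<Sum>i<s. (g i)\<^sup>2)"
    have ngp: "ng > 0" using False unfolding ng_def by (simp add: order_le_neq_trans sum_nonneg)
    define c where "c = sqrt ng"
    have cp: "c > 0" and c2: "c\<^sup>2 = ng" unfolding c_def using ngp by auto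
    define h where "h = (\<lambda>i. if i < s then g i / c else 0)"
    have nh: "(\<Sum>i<s. (h i)\<^sup>2) = 1"
    proof -
      have "(\<Sum>i<s. (h i)\<^sup>2) = (\<Sum>i<s. (g i)\<^sup>2 / c\<^sup>2)" unfolding h_def by (simp add: power_divide)
      also have "\<dots> = ng / c\<^sup>2" unfolding ng_def by (simp add: sum_divide_distrib)
      finally show ?thesis using c2 ngp by simp
    qed
    have "h \<in> S" unfolding S_def
    proof (intro CollectI conjI allI nh)
      fix i
      show "h i \<in> (if i < s then {-1..1} else {0})"
      proof (cases "i < s")
        case True
        have "(h i)\<^sup>2 \<le> (\<Sum>i<s. (h i)\<^sup>2)" by (rule member_le_sum) (use True in auto)
        hence "(h i)\<^sup>2 \<le> 1\<^sup>2" using nh by simp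
        hence "\<bar>h i\<bar> \<le> 1" using abs_le_square_iff by (metis abs_one)
        thus ?thesis using True by auto
      qed (simp add: h_def)
    qed
    hence "q f0 f0 \<le> q h h" by (rule f0min)
    also have "q h h = q g g / c\<^sup>2" unfolding q_def h_def
      by (simp add: sum_divide_distrib power2_eq_square)
    finally have "\<mu> * c\<^sup>2 \<le> q g g" unfolding \<mu>_def using cp by (simp add: field_simps)
    thus ?thesis using c2 ng_def by simp
  qed
  define w where "w = (\<lambda>i. (\<Sum>j<s. a i j * f0 j) - \<mu> * f0 i)"
  have symq: "q f g = q g f" for f g
    unfolding q_def
    by (subst sum.swap) (intro sum.cong refl, simp add: sym mult.commute mult.left_commute)
  have expand: "q (\<lambda>i. f0 i + t * w i) (\<lambda>i. f0 i + t * w i)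
      = q f0 f0 + 2 * t * q w f0 + t\<^sup>2 * q w w" for t
  proof -
    have "q (\<lambda>i. f0 i + t * w i) (\<lambda>i. f0 i + t * w i) = q f0 f0 + t * q f0 w + t * q w f0 + t\<^sup>2 * q w w"
      unfolding q_def
      by (simp add: sum.distrib sum_distrib_left algebra_simps power2_eq_square)
    thus ?thesis using symq[of f0 w] by simp
  qed
  have nexpand: "(\<Sum>i<s. (f0 i + t * w i)\<^sup>2) = (\<Sum>i<s. (f0 i)\<^sup>2) + 2 * t * (\<Sum>i<s. w i * f0 i) + t\<^sup>2 * (\<Sum>i<s. (w i)\<^sup>2)" for t
    by (simp add: sum.distrib sum_distrib_left algebra_simps power2_eq_square)
  have qwf: "q w f0 = (\<Sum>i<s. w i * (\<Sum>j<s. a i j * f0 j))"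
    unfolding q_def by (simp add: sum_distrib_left mult.commute mult.left_commute)
  have bw: "q w f0 - \<mu> * (\<Sum>i<s. w i * f0 i) = (\<Sum>i<s. (w i)\<^sup>2)"
  proof -
    have "q w f0 - \<mu> * (\<Sum>i<s. w i * f0 i) = (\<Sum>i<s. w i * ((\<Sum>j<s. a i j * f0 j) - \<mu> * f0 i))"
      unfolding qwf by (simp add: sum_subtractf sum_distrib_left algebra_simps)
    also have "\<dots> = (\<Sum>i<s. (w i)\<^sup>2)" unfolding w_def by (simp add: power2_eq_square)
    finally show ?thesis .
  qed
  have "0 \<le> 2*t*(\<Sum>i<s. (w i)\<^sup>2) + t\<^sup>2*(q w w - \<mu> * (\<Sum>i<s. (w i)\<^sup>2))" for t
  proof -
    have "\<mu> * (\<Sum>i<s. (f0 i + t * w i)\<^sup>2) \<le> q (\<lambda>i. f0 i + t * w i) (\<lambda>i. f0 i + t * w i)"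
      by (rule lower)
    hence "\<mu> * (1 + 2 * t * (\<Sum>i<s. w i * f0 i) + t\<^sup>2 * (\<Sum>i<s. (w i)\<^sup>2)) \<le> \<mu> + 2 * t * q w f0 + t\<^sup>2 * q w w"
      unfolding expand nexpand n0 \<mu>_def[symmetric] .
    thus ?thesis using bw by (simp add: algebra_simps)
  qed
  hence "(\<Sum>i<s. (w i)\<^sup>2) = 0" by (rule quad_zero)
  hence "\<forall>i\<in>{..<s}. (w i)\<^sup>2 = 0" by (subst sum_nonneg_eq_0_iff[symmetric]) auto
  hence "\<forall>i<s. (\<Sum>j<s. a i j * f0 j) = \<mu> * f0 i" unfolding w_def by simp
  with n0 lower show ?thesis by blast
qed


lemma quad_coord:
  fixes A :: "real mat"
  assumes A: "A \<in> carrier_mat s s" and x: "x \<in> carrier_vec s" and y: "y \<in> carrier_vec s"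
  shows "x \<bullet> (A *\<^sub>v y) = (\<Sum>i<s. \<Sum>j<s. A $$ (i,j) * x $ i * y $ j)"
proof -
  have "x \<bullet> (A *\<^sub>v y) = (\<Sum>i<s. x $ i * (A *\<^sub>v y) $ i)"
    unfolding scalar_prod_def using A by (simp add: atLeast0LessThan)
  also have "\<dots> = (\<Sum>i<s. x $ i * (\<Sum>j<s. A $$ (i,j) * y $ j))"
    using A x y by (intro sum.cong refl) (simp add: scalar_prod_def atLeast0LessThan)
  also have "\<dots> = (\<Sum>i<s. \<Sum>j<s. A $$ (i,j) * x $ i * y $ j)"
    by (simp add: sum_distrib_left mult.commute mult.left_commute)
  finally show ?thesis .
qed

lemma unit_coord:
  fixes A :: "real mat"
  assumes A: "A \<in> carrier_mat s s" and x: "x \<in> carrier_vec s" and k: "k < s"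
  shows "x \<bullet> (A *\<^sub>v unit_vec s k) = (\<Sum>i<s. A $$ (i,k) * x $ i)"
proof -
  have "x \<bullet> (A *\<^sub>v unit_vec s k) = (\<Sum>i<s. \<Sum>j<s. A $$ (i,j) * x $ i * unit_vec s k $ j)"
    using quad_coord[OF A x, of "unit_vec s k"] by simp
  also have "\<dots> = (\<Sum>i<s. A $$ (i,k) * x $ i)"
  proof (intro sum.cong refl)
    fix i assume "i \<in> {..<s}"
    have "(\<Sum>j<s. A $$ (i,j) * x $ i * unit_vec s k $ j) = (\<Sum>j<s. if j = k then A $$ (i,j) * x $ i else 0)"
      using k by (intro sum.cong refl) simp
    also have "\<dots> = A $$ (i,k) * x $ i" using k by (simp add: sum.delta)
    finally show "(\<Sum>j<s. A $$ (i,j) * x $ i * unit_vec s k $ j) = A $$ (i,k) * x $ i" .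
  qed
  finally show ?thesis .
qed

lemma eigen_from_fun:
  fixes A :: "real mat"
  assumes A: "A \<in> carrier_mat s s"
    and ev: "\<forall>i<s. (\<Sum>j<s. A $$ (i,j) * f j) = \<mu> * f i" and n: "(\<Sum>i<s. (f i)\<^sup>2) = 1"
  shows "eigenvalue A \<mu>"
proof -
  define v where "v = Matrix.vec s f"
  have v: "v \<in> carrier_vec s" unfolding v_def by simp
  have "v \<noteq> 0\<^sub>v s"
  proof
    assume "v = 0\<^sub>v s"
    hence "\<forall>i<s. f i = 0" unfolding v_def by (metis index_vec index_zero_vec(1))
    hence "(\<Sum>i<s. (f i)\<^sup>2) = 0" by simp
    with n show False by simp
  qed
  moreover have "A *\<^sub>v v = \<mu> \<cdot>\<^sub>v v"
  proof (rule eq_vecI)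
    fix i assume i: "i < dim_vec (\<mu> \<cdot>\<^sub>v v)"
    hence i': "i < s" using v by simp
    have "(A *\<^sub>v v) $ i = (\<Sum>j<s. A $$ (i,j) * f j)"
      using A i' unfolding v_def by (simp add: scalar_prod_def atLeast0LessThan)
    also have "\<dots> = \<mu> * f i" using ev i' by simp
    finally show "(A *\<^sub>v v) $ i = (\<mu> \<cdot>\<^sub>v v) $ i" using i' v_def by simp
  qed (use A v in simp)
  ultimately show ?thesis unfolding eigenvalue_def eigenvector_def using A v by auto
qed

lemma rayleigh_mat:
  fixes A :: "real mat"
  assumes A: "A \<in> carrier_mat s s" and s: "0 < s"
    and sym: "\<And>i j. i<s \<Longrightarrow> j<s \<Longrightarrow> A $$ (i,j) = A $$ (j,i)"
  shows "\<exists>\<mu>. eigenvalue A \<mu> \<and> (\<forall>x\<in>carrier_vec s. x \<bullet> (A *\<^sub>v x) \<ge> \<mu> * (x \<bullet> x))"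
proof -
  obtain f0 \<mu> where n0: "(\<Sum>i<s. (f0 i)\<^sup>2) = 1"
    and ev: "\<forall>i<s. (\<Sum>j<s. A $$ (i,j) * f0 j) = \<mu> * f0 i"
    and low: "\<forall>g. (\<Sum>i<s. \<Sum>j<s. A $$ (i,j) * g i * g j) \<ge> \<mu> * (\<Sum>i<s. (g i)\<^sup>2)"
    using rayleigh_fun[of s "\<lambda>i j. A $$ (i,j)", OF sym s] by blast
  have "eigenvalue A \<mu>" by (rule eigen_from_fun[OF A ev n0])
  moreover have "x \<bullet> (A *\<^sub>v x) \<ge> \<mu> * (x \<bullet> x)" if x: "x \<in> carrier_vec s" for x
  proof -
    have "x \<bullet> x = (\<Sum>i<s. (x $ i)\<^sup>2)" using x
      by (simp add: scalar_prod_def atLeast0LessThan power2_eq_square)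
    thus ?thesis using quad_coord[OF A x x] low[rule_format, of "\<lambda>i. x $ i"] by simp
  qed
  ultimately show ?thesis by blast
qed

definition ca :: "real \<Rightarrow> real \<Rightarrow> nat \<Rightarrow> nat \<Rightarrow> nat \<Rightarrow> real" where
  "ca \<alpha> \<beta> s i j = \<beta> * (if i = j then 1 else 0)
     + \<alpha> * ((if j = (i+1) mod s then 1 else 0) + (if i = (j+1) mod s then 1 else 0))"

lemma circA_carrier: "circA \<alpha> \<beta> s \<in> carrier_mat s s"
  unfolding circA_def cyc_shift_def by auto

lemma circA_idx: "i < s \<Longrightarrow> j < s \<Longrightarrow> circA \<alpha> \<beta> s $$ (i,j) = ca \<alpha> \<beta> s i j"
  unfolding circA_def cyc_shift_def ca_def by simp

lemma shift_sum:
  fixes g :: "nat \<Rightarrow> real"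
  assumes "0 < s"
  shows "(\<Sum>i<s. g ((i+1) mod s)) = (\<Sum>i<s. g i)"
proof -
  obtain m where m: "s = Suc m" using assms by (cases s) auto
  have "(\<Sum>i<Suc m. g ((i+1) mod Suc m)) = (\<Sum>i<m. g ((i+1) mod Suc m)) + g 0"
    by simp
  also have "(\<Sum>i<m. g ((i+1) mod Suc m)) = (\<Sum>i<m. g (Suc i))"
    by (intro sum.cong refl) simp
  also have "(\<Sum>i<m. g (Suc i)) + g 0 = (\<Sum>i<Suc m. g i)"
    unfolding sum.lessThan_Suc_shift by simp
  finally show ?thesis using m by simp
qed

lemma ca_rowsum:
  assumes s: "0 < s" and i: "i < s"
  shows "(\<Sum>k<s. ca \<alpha> \<beta> s i k) = \<beta> + 2 * \<alpha>"
proof -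
  have a: "(\<Sum>k<s. (if i = k then 1 else 0::real)) = 1" using i by (simp add: sum.delta)
  have b: "(\<Sum>k<s. (if k = (i+1) mod s then 1 else 0::real)) = 1" using s by (simp add: sum.delta')
  have c: "(\<Sum>k<s. (if i = (k+1) mod s then 1 else 0::real)) = 1"
    using shift_sum[OF s, of "\<lambda>k. if i = k then 1 else 0"] a by simp
  show ?thesis unfolding ca_def sum.distrib sum_distrib_left[symmetric] a b c by simp
qed

lemma ca_sym: "ca \<alpha> \<beta> s i j = ca \<alpha> \<beta> s j i"
  unfolding ca_def by auto

lemma ca_nonneg: "\<alpha> \<ge> 0 \<Longrightarrow> \<beta> \<ge> 0 \<Longrightarrow> ca \<alpha> \<beta> s i j \<ge> 0"
  unfolding ca_def by simp

lemma ca_quad_lower: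
  assumes s: "0 < s" and a: "\<alpha> \<ge> 0"
  shows "(\<Sum>i<s. \<Sum>j<s. ca \<alpha> \<beta> s i j * g i * g j) \<ge> (\<beta> - 2*\<alpha>) * (\<Sum>i<s. (g i)\<^sup>2)"
proof -
  have row: "(\<Sum>j<s. ca \<alpha> \<beta> s i j * g i * g j) = \<beta> * (g i)\<^sup>2 + \<alpha> * (g i * g ((i+1) mod s)) + \<alpha> * (\<Sum>j<s. if i = (j+1) mod s then g i * g j else 0)"
    if i: "i < s" for i
  proof -
    have "(\<Sum>j<s. ca \<alpha> \<beta> s i j * g i * g j) = (\<Sum>j<s. (if i = j then \<beta> * (g i)\<^sup>2 else 0) + (if j = (i+1) mod s then \<alpha> * (g i * g ((i+1) mod s)) else 0) + \<alpha> * (if i = (j+1) mod s then g i * g j else 0))"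
      unfolding ca_def by (intro sum.cong refl) (auto simp: algebra_simps power2_eq_square)
    also have "\<dots> = \<beta> * (g i)\<^sup>2 + \<alpha> * (g i * g ((i+1) mod s)) + \<alpha> * (\<Sum>j<s. if i = (j+1) mod s then g i * g j else 0)"
      using i s by (simp add: sum.distrib sum_distrib_left[symmetric] sum.delta sum.delta')
    finally show ?thesis .
  qed
  have third: "(\<Sum>i<s. \<Sum>j<s. if i = (j+1) mod s then g i * g j else 0) = (\<Sum>j<s. g ((j+1) mod s) * g j)"
    by (subst sum.swap) (simp add: sum.delta)
  define T where "T = (\<Sum>i<s. (g i)\<^sup>2)"
  have sh: "(\<Sum>i<s. (g ((i+1) mod s))\<^sup>2) = T" unfolding T_def by (rule shift_sum[OF s])
  have p1: "(\<Sum>i<s. g i * g ((i+1) mod s)) \<ge> - T"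
  proof -
    have "(\<Sum>i<s. g i * g ((i+1) mod s)) \<ge> (\<Sum>i<s. - ((g i)\<^sup>2 + (g ((i+1) mod s))\<^sup>2) / 2)"
    proof (intro sum_mono)
      fix i
      have "0 \<le> (g i + g ((i+1) mod s))\<^sup>2" by simp
      thus "- ((g i)\<^sup>2 + (g ((i+1) mod s))\<^sup>2) / 2 \<le> g i * g ((i+1) mod s)"
        by (simp add: power2_eq_square algebra_simps)
    qed
    also have "(\<Sum>i<s. - ((g i)\<^sup>2 + (g ((i+1) mod s))\<^sup>2) / 2) = - T"
      using sh unfolding T_def by (simp add: sum_divide_distrib[symmetric] sum.distrib sum_negf sum_subtractf)
    finally show ?thesis .
  qed
  have "(\<Sum>i<s. \<Sum>j<s. ca \<alpha> \<beta> s i j * g i * g j) = \<beta> * T + \<alpha> * (\<Sum>i<s. g i * g ((i+1) mod s)) + \<alpha> * (\<Sum>j<s. g ((j+1) mod s) * g j)"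
    unfolding T_def using row third by (simp add: sum.distrib sum_distrib_left[symmetric])
  also have "\<dots> = \<beta> * T + 2 * \<alpha> * (\<Sum>i<s. g i * g ((i+1) mod s))"
    by (simp add: mult.commute algebra_simps)
  also have "\<dots> \<ge> \<beta> * T + 2 * \<alpha> * (- T)"
    using mult_left_mono[OF p1, of "2*\<alpha>"] a by linarith
  finally show ?thesis unfolding T_def by (simp add: algebra_simps)
qed


lemma lncosh_le: "ln (cosh (t::real)) \<le> \<bar>t\<bar>"
proof -
  have e1: "exp t \<le> exp \<bar>t\<bar>" and e2: "exp (-t) \<le> exp \<bar>t\<bar>" by auto
  have "cosh t \<le> exp \<bar>t\<bar>" unfolding cosh_field_def using add_mono[OF e1 e2] by simp
  moreover have "cosh t > 0" by (simp add: cosh_real_pos)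
  ultimately have "ln (cosh t) \<le> ln (exp \<bar>t\<bar>)" by (subst ln_le_cancel_iff) auto
  thus ?thesis by simp
qed

lemma dot_self: "x \<in> carrier_vec s \<Longrightarrow> x \<bullet> x = (\<Sum>i<s. ((x::real vec) $ i)\<^sup>2)"
  unfolding power2_eq_square by (simp add: scalar_prod_def atLeast0LessThan)

theorem lemma7p8:
  fixes \<alpha> \<beta> R lmin lmax :: real and N s :: nat and x :: "real vec"
  assumes "\<beta> > 2 * \<alpha>" and "2 * \<alpha> > 0"
    and "0 < s" and "s \<le> N"
    and "eigenvalue (circA \<alpha> \<beta> s) lmin"
    and "eigenvalue (circA \<alpha> \<beta> s) lmax"
    and "\<And>mu. eigenvalue (circA \<alpha> \<beta> s) mu \<Longrightarrow> lmin \<le> mu \<and> mu \<le> lmax"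
    and "R > 2 * lmax / lmin"
    and "x \<in> carrier_vec s"
    and "vnorm x > R * sqrt (real N)"
  shows "real N / real s * phiN \<alpha> \<beta> s (sqrt (real s / real N) \<cdot>\<^sub>v x)
           \<ge> (lmin / 2 - lmax / R) * (vnorm x)\<^sup>2"
proof -
  note ab = assms(1,2) and s = assms(3) and sN = assms(4) and evmin = assms(5)
    and bnd = assms(7) and Rb = assms(8) and x = assms(9) and xn = assms(10)
  define A where "A = circA \<alpha> \<beta> s"
  have Ac: "A \<in> carrier_mat s s" unfolding A_def by (rule circA_carrier)
  have Aidx: "\<And>i j. i < s \<Longrightarrow> j < s \<Longrightarrow> A $$ (i,j) = ca \<alpha> \<beta> s i j"
    unfolding A_def by (rule circA_idx)
  have Asym: "\<And>i j. i<s \<Longrightarrow> j<s \<Longrightarrow> A $$ (i,j) = A $$ (j,i)"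
    using Aidx ca_sym by metis
  have a0: "\<alpha> \<ge> 0" "\<beta> \<ge> 0" using ab by auto
  obtain \<mu> where ev\<mu>: "eigenvalue A \<mu>" and ray: "\<forall>x\<in>carrier_vec s. x \<bullet> (A *\<^sub>v x) \<ge> \<mu> * (x \<bullet> x)"
    using rayleigh_mat[OF Ac s Asym] by blast
  have lmu: "lmin \<le> \<mu>" using bnd ev\<mu> unfolding A_def by blast
  have "eigenvalue A (\<beta> + 2*\<alpha>)"
  proof (rule eigen_from_fun[OF Ac, where f="\<lambda>i. 1 / sqrt (real s)"])
    show "\<forall>i<s. (\<Sum>j<s. A $$ (i,j) * (1 / sqrt (real s))) = (\<beta> + 2*\<alpha>) * (1 / sqrt (real s))"
    proof (intro allI impI)
      fix i assume i: "i < s"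
      have "(\<Sum>j<s. A $$ (i,j) * (1 / sqrt (real s))) = (\<Sum>j<s. ca \<alpha> \<beta> s i j) * (1 / sqrt (real s))"
        using i Aidx by (simp add: sum_divide_distrib)
      thus "(\<Sum>j<s. A $$ (i,j) * (1 / sqrt (real s))) = (\<beta> + 2*\<alpha>) * (1 / sqrt (real s))"
        using ca_rowsum[OF s i] by simp
    qed
    show "(\<Sum>i<s. (1 / sqrt (real s))\<^sup>2) = 1" using s by (simp add: power_divide)
  qed
  hence lmax_ge: "\<beta> + 2*\<alpha> \<le> lmax" using bnd unfolding A_def by blast
  have lmin_pos: "lmin > 0"
  proof -
    obtain v where v: "v \<in> carrier_vec s" and v0: "v \<noteq> 0\<^sub>v s" and Av: "A *\<^sub>v v = lmin \<cdot>\<^sub>v v"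
      using evmin Ac unfolding A_def[symmetric] eigenvalue_def eigenvector_def by auto
    have vv: "v \<bullet> v > 0"
    proof -
      have "v \<bullet> v \<ge> 0" using dot_self[OF v] by (simp add: sum_nonneg)
      moreover have "v \<bullet> v \<noteq> 0"
      proof
        assume "v \<bullet> v = 0"
        hence "\<forall>i\<in>{..<s}. (v $ i)\<^sup>2 = 0" using dot_self[OF v] by (subst sum_nonneg_eq_0_iff[symmetric]) auto
        hence "v = 0\<^sub>v s" using v by (intro eq_vecI) auto
        with v0 show False by simp
      qed
      ultimately show ?thesis by simp
    qed
    have "v \<bullet> (A *\<^sub>v v) = lmin * (v \<bullet> v)" unfolding Av using v by simp
    moreover have "v \<bullet> (A *\<^sub>v v) \<ge> (\<beta> - 2*\<alpha>) * (v \<bullet> v)"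
    proof -
      have "v \<bullet> (A *\<^sub>v v) = (\<Sum>i<s. \<Sum>j<s. ca \<alpha> \<beta> s i j * v $ i * v $ j)"
        unfolding quad_coord[OF Ac v v] using Aidx by simp
      thus ?thesis using ca_quad_lower[OF s a0(1), of \<beta> "\<lambda>i. v $ i"] dot_self[OF v] by simp
    qed
    ultimately have "(\<beta> - 2*\<alpha>) * (v \<bullet> v) \<le> lmin * (v \<bullet> v)" by simp
    hence "\<beta> - 2*\<alpha> \<le> lmin" using vv by simp
    thus ?thesis using ab by simp
  qed
  have lmax_pos: "lmax > 0" using lmax_ge ab by simp
  have Rpos: "R > 0" using Rb lmin_pos lmax_pos by (smt (verit) divide_pos_pos)
  define vn where "vn = vnorm x"
  have xx0: "0 \<le> x \<bullet> x" unfolding dot_self[OF x] by (simp add: sum_nonneg)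
  have vn2: "vn\<^sup>2 = x \<bullet> x" unfolding vn_def vnorm_def using xx0 by simp
  have vnnn: "vn \<ge> 0" unfolding vn_def vnorm_def using xx0 by simp
  define c where "c = sqrt (real s / real N)"
  have Npos: "real N > 0" using s sN by simp
  have cpos: "c > 0" unfolding c_def using s Npos by simp
  define y where "y = c \<cdot>\<^sub>v x"
  have y: "y \<in> carrier_vec s" unfolding y_def using x by simp
  have yi: "\<And>i. i < s \<Longrightarrow> y $ i = c * x $ i" unfolding y_def using x by simp
  define Q where "Q = x \<bullet> (A *\<^sub>v x)"
  have Qlow: "Q \<ge> lmin * vn\<^sup>2"
  proof -
    have "x \<bullet> x \<ge> 0" using vn2 by (metis zero_le_power2)
    hence "lmin * (x \<bullet> x) \<le> \<mu> * (x \<bullet> x)" using lmu by (simp add: mult_right_mono)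
    thus ?thesis using ray x unfolding Q_def vn2 by fastforce
  qed
  have yQ: "y \<bullet> (A *\<^sub>v y) = c\<^sup>2 * Q"
    unfolding Q_def quad_coord[OF Ac y y] quad_coord[OF Ac x x] sum_distrib_left
    by (intro sum.cong refl) (simp add: yi power2_eq_square algebra_simps)
  define L where "L = (\<Sum>k<s. ln (cosh (y \<bullet> (A *\<^sub>v unit_vec s k))))"
  have Lb: "L \<le> lmax * c * sqrt (real s) * vn"
  proof -
    have "L \<le> (\<Sum>k<s. \<bar>y \<bullet> (A *\<^sub>v unit_vec s k)\<bar>)"
      unfolding L_def by (intro sum_mono lncosh_le)
    also have "\<dots> \<le> (\<Sum>k<s. \<Sum>i<s. ca \<alpha> \<beta> s i k * \<bar>y $ i\<bar>)"
    proof (intro sum_mono)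
      fix k assume k: "k \<in> {..<s}"
      have "\<bar>y \<bullet> (A *\<^sub>v unit_vec s k)\<bar> = \<bar>\<Sum>i<s. ca \<alpha> \<beta> s i k * y $ i\<bar>"
        using unit_coord[OF Ac y, of k] k Aidx by simp
      also have "\<dots> \<le> (\<Sum>i<s. \<bar>ca \<alpha> \<beta> s i k * y $ i\<bar>)" by (rule sum_abs)
      also have "\<dots> = (\<Sum>i<s. ca \<alpha> \<beta> s i k * \<bar>y $ i\<bar>)"
        using ca_nonneg[OF a0] by (simp add: abs_mult)
      finally show "\<bar>y \<bullet> (A *\<^sub>v unit_vec s k)\<bar> \<le> (\<Sum>i<s. ca \<alpha> \<beta> s i k * \<bar>y $ i\<bar>)" .
    qed
    also have "\<dots> = (\<Sum>i<s. (\<Sum>k<s. ca \<alpha> \<beta> s i k) * \<bar>y $ i\<bar>)"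
      by (subst sum.swap) (simp add: sum_distrib_right)
    also have "\<dots> = (\<beta> + 2*\<alpha>) * c * (\<Sum>i<s. \<bar>x $ i\<bar>)"
      using ca_rowsum[OF s] yi cpos by (simp add: sum_distrib_left abs_mult mult.assoc)
    also have "\<dots> \<le> lmax * c * (sqrt (real s) * vn)"
    proof (rule mult_mono)
      show "(\<beta> + 2*\<alpha>) * c \<le> lmax * c" using lmax_ge cpos by simp
      have "(\<Sum>i<s. \<bar>x $ i\<bar>)\<^sup>2 \<le> (\<Sum>i<s. \<bar>x $ i\<bar>\<^sup>2) * real (card {..<s})"
        by (rule sum_squared_le_sum_of_squares)
      also have "(\<Sum>i<s. \<bar>x $ i\<bar>\<^sup>2) = (\<Sum>i<s. (x $ i)\<^sup>2)" by simp
      also have "\<dots> = vn\<^sup>2" unfolding vn2 dot_self[OF x] ..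
      also have "vn\<^sup>2 * real (card {..<s}) = (sqrt (real s) * vn)\<^sup>2"
        unfolding card_lessThan power_mult_distrib by simp
      finally have sq: "(\<Sum>i<s. \<bar>x $ i\<bar>)\<^sup>2 \<le> (sqrt (real s) * vn)\<^sup>2" .
      show "(\<Sum>i<s. \<bar>x $ i\<bar>) \<le> sqrt (real s) * vn"
        by (rule power2_le_imp_le[OF sq]) (simp add: vnnn)
      show "0 \<le> lmax * c" using lmax_pos cpos by simp
      show "0 \<le> (\<Sum>i<s. \<bar>x $ i\<bar>)" by (rule sum_nonneg) simp
    qed
    finally show ?thesis by (simp add: mult.assoc)
  qed
  have key: "real N / real s * c\<^sup>2 = 1" unfolding c_def using s Npos by simp
  have key2: "real N / real s * (c * sqrt (real s)) = sqrt (real N)"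
  proof -
    have "c * sqrt (real s) = real s / sqrt (real N)" unfolding c_def using s Npos
      by (simp add: real_sqrt_divide)
    hence "real N / real s * (c * sqrt (real s)) = real N / sqrt (real N)" using s by simp
    also have "\<dots> = sqrt (real N)" using Npos by (simp add: real_div_sqrt)
    finally show ?thesis .
  qed
  have phi: "phiN \<alpha> \<beta> s y = 1/2 * (c\<^sup>2 * Q) - L"
    unfolding phiN_def L_def yQ[symmetric] A_def ..
  have "real N / real s * phiN \<alpha> \<beta> s y = 1/2 * (real N / real s * c\<^sup>2) * Q - real N / real s * L"
    unfolding phi by (simp add: algebra_simps)
  also have "\<dots> = Q / 2 - real N / real s * L" unfolding key by simp
  also have "\<dots> \<ge> lmin * vn\<^sup>2 / 2 - lmax * sqrt (real N) * vn"
  proof -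
    have "real N / real s * L \<le> real N / real s * (lmax * c * sqrt (real s) * vn)"
      using Lb s by (intro mult_left_mono) auto
    also have "\<dots> = lmax * vn * (real N / real s * (c * sqrt (real s)))" by (simp add: algebra_simps)
    also have "\<dots> = lmax * sqrt (real N) * vn" using key2 by simp
    finally show ?thesis using Qlow by simp
  qed
  finally have main: "real N / real s * phiN \<alpha> \<beta> s y \<ge> lmin * vn\<^sup>2 / 2 - lmax * sqrt (real N) * vn" .
  have "sqrt (real N) * vn \<le> vn / R * vn"
  proof (rule mult_right_mono)
    show "sqrt (real N) \<le> vn / R" using xn Rpos unfolding vn_def by (simp add: field_simps mult.commute)
  qed (rule vnnn)
  hence "lmax * (sqrt (real N) * vn) \<le> lmax * (vn / R * vn)" using lmax_pos by (intro mult_left_mono) auto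
  hence "lmax * sqrt (real N) * vn \<le> lmax / R * vn\<^sup>2" by (simp add: power2_eq_square algebra_simps)
  moreover have "(lmin / 2 - lmax / R) * vn\<^sup>2 = lmin * vn\<^sup>2 / 2 - lmax / R * vn\<^sup>2"
    by (simp add: algebra_simps)
  ultimately have "real N / real s * phiN \<alpha> \<beta> s y \<ge> (lmin / 2 - lmax / R) * vn\<^sup>2"
    using main by linarith
  thus ?thesis unfolding y_def c_def vn_def .
qed

end
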